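(* Let $q_1,q_2$ be coprime positive integers, $Q=q_1q_2$, let $V:\mathbb{Z}^2\to\mathbb{R}$ be $(q_1,q_2)$-periodic, and let $\lambda_*\in\mathbb{C}$. Let $N\subset\mathbb{R}^2$ be the quadrilateral with vertices $(q_2,0)$, $(0,q_1)$, $(-q_2,0)$, $(0,-q_1)$. Then $N$ contains every exponent vector of the Laurent polynomial $z_1\frac{\partial}{\partial z_1}\mathcal{P}(z,\lambda_* )$.
   Context: $V$ is $(q_1,q_2)$-periodic if $V(n_1,n_2)=V(n_1+q_1,n_2)=V(n_1,n_2+q_2)$ for all $(n_1,n_2)\in\mathbb{Z}^2$. The operator $\Delta+V$ acts on $u:\mathbb{Z}^2\to\mathbb{C}$ by $((\Delta+V)u)(n)=u(n_1+1,n_2)+u(n_1-1,n_2)+u(n_1,n_2+1)+u(n_1,n_2-1)+V(n)u(n)$. For $z=(z_1,z_2)\in(\mathbb{C}\setminus\{0\})^2$, $\mathcal{D}_V(z)$ is the $Q\times Q$ matrix of $\Delta+V$ acting on the space of functions $u$ with $u(n_1+q_1,n_2)=z_1u(n)$ and $u(n_1,n_2+q_2)=z_2u(n)$ for all $n$, in the coordinates $\{u(n_1,n_2):1\le n_1\le q_1,1\le n_2\le q_2\}$, and $\mathcal{P}(z,\lambda)=\det(\mathcal{D}_V(z)-\lambda I)$, a Laurent polynomial in $z$. An exponent vector of a Laurent polynomial $\sum_i c_iz^{e_i}$ is an $e_i\in\mathbb{Z}^2$ with $c_i\neq 0$. *)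

theory Defs
  imports "HOL-Analysis.Analysis" "HOL-Library.Poly_Mapping" "Jordan_Normal_Form.Determinant"
begin

text \<open>Laurent polynomials in z = (z1,z2) with complex coefficients are modelled as
finitely supported coefficient maps (int x int) =>0 complex; the exponent (a,b)
stands for the monomial z1^a z2^b, multiplication is convolution (a commutative ring).
The exponent vectors of a Laurent polynomial p are exactly keys p.\<close>

type_synonym laurent2 = "(int \<times> int) \<Rightarrow>\<^sub>0 complex"

definition lmono :: "int \<times> int \<Rightarrow> laurent2" where
  "lmono e = Poly_Mapping.single e 1"

definition lconst :: "complex \<Rightarrow> laurent2" where
  "lconst c = Poly_Mapping.single (0,0) c"

definition z1_dz1 :: "laurent2 \<Rightarrow> laurent2" where
  "z1_dz1 p = Poly_Mapping.mapp (\<lambda>e c. of_int (fst e) * c) p"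

definition periodic2 :: "nat \<Rightarrow> nat \<Rightarrow> (int \<times> int \<Rightarrow> real) \<Rightarrow> bool" where
  "periodic2 q1 q2 V \<longleftrightarrow> (\<forall>n1 n2. V (n1,n2) = V (n1 + int q1, n2) \<and> V (n1,n2) = V (n1, n2 + int q2))"

definition site :: "nat \<Rightarrow> nat \<Rightarrow> (int \<times> int)" where
  "site q1 k = (int (k mod q1) + 1, int (k div q1) + 1)"

text \<open>Reduction of a lattice point n into the fundamental domain: n = red n + (k1 q1, k2 q2),
with red n in {1..q1} \<times> {1..q2} and shift n = (k1,k2).\<close>
definition red :: "nat \<Rightarrow> nat \<Rightarrow> int \<times> int \<Rightarrow> int \<times> int" where
  "red q1 q2 n = ((fst n - 1) mod int q1 + 1, (snd n - 1) mod int q2 + 1)"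

definition shift :: "nat \<Rightarrow> nat \<Rightarrow> int \<times> int \<Rightarrow> int \<times> int" where
  "shift q1 q2 n = ((fst n - 1) div int q1, (snd n - 1) div int q2)"

text \<open>Matrix entry of \<Delta>+V on the space of u with u(n+(q1,0)) = z1 u(n), u(n+(0,q2)) = z2 u(n):
((\<Delta>+V)u)(n) = \<Sum>_{d} u(n+d) + V(n) u(n), and u(n+d) = z^{shift(n+d)} u(red(n+d)).\<close>
definition DV_entry :: "nat \<Rightarrow> nat \<Rightarrow> (int \<times> int \<Rightarrow> real) \<Rightarrow> int \<times> int \<Rightarrow> int \<times> int \<Rightarrow> laurent2" where
  "DV_entry q1 q2 V n m =
     (\<Sum>d\<leftarrow>[(1,0),(-1,0),(0,1),(0,-1)].
        if red q1 q2 (n + d) = m then lmono (shift q1 q2 (n + d)) else 0)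
     + (if n = m then lconst (complex_of_real (V n)) else 0)"

definition DV :: "nat \<Rightarrow> nat \<Rightarrow> (int \<times> int \<Rightarrow> real) \<Rightarrow> laurent2 mat" where
  "DV q1 q2 V = Matrix.mat (q1*q2) (q1*q2) (\<lambda>(i,j). DV_entry q1 q2 V (site q1 i) (site q1 j))"

definition charP :: "nat \<Rightarrow> nat \<Rightarrow> (int \<times> int \<Rightarrow> real) \<Rightarrow> complex \<Rightarrow> laurent2" where
  "charP q1 q2 V lam = Determinant.det (DV q1 q2 V - lconst lam \<cdot>\<^sub>m 1\<^sub>m (q1*q2))"

definition quadN :: "nat \<Rightarrow> nat \<Rightarrow> (real \<times> real) set" where
  "quadN q1 q2 = convex hull {(real q2, 0), (0, real q1), (- real q2, 0), (0, - real q1)}"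

end

theory Submission
  imports Defs
begin

lemma keys_prod_sub:
  fixes f :: "nat \<Rightarrow> laurent2"
  assumes "finite I"
  shows "Poly_Mapping.keys (prod f I) \<subseteq> {sum g I | g. \<forall>i\<in>I. g i \<in> Poly_Mapping.keys (f i)}"
  using assms
proof (induction I rule: finite_induct)
  case empty
  then show ?case by (auto simp: zero_prod_def)
next
  case (insert x F)
  show ?case
  proof
    fix e assume "e \<in> Poly_Mapping.keys (prod f (insert x F))"
    then have "e \<in> Poly_Mapping.keys (f x * prod f F)" using insert by simp
    then obtain a b where ab: "e = a + b" "a \<in> Poly_Mapping.keys (f x)" "b \<in> Poly_Mapping.keys (prod f F)"
      using Poly_Mapping.keys_mult by blast
    then obtain g where g: "b = sum g F" "\<forall>i\<in>F. g i \<in> Poly_Mapping.keys (f i)" using insert by blast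
    define g' where "g' = g(x := a)"
    have "sum g' F = sum g F" using insert(2) by (intro sum.cong) (auto simp: g'_def)
    then have "e = sum g' (insert x F)" using insert ab g by (simp add: g'_def)
    moreover have "\<forall>i\<in>insert x F. g' i \<in> Poly_Mapping.keys (f i)" using g ab by (auto simp: g'_def)
    ultimately show "e \<in> {sum g (insert x F) | g. \<forall>i\<in>insert x F. g i \<in> Poly_Mapping.keys (f i)}" by blast
  qed
qed

definition okstep :: "nat \<Rightarrow> nat \<Rightarrow> int \<times> int \<Rightarrow> int \<times> int \<Rightarrow> int \<times> int \<Rightarrow> bool" where
  "okstep q1 q2 n m e \<longleftrightarrow> (\<exists>dx dy. \<bar>dx\<bar> + \<bar>dy\<bar> \<le> 1 \<and>
      int q1 * fst e = fst n + dx - fst m \<and> int q2 * snd e = snd n + dy - snd m)"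

lemma red_shift:
  assumes "q1 > 0" "q2 > 0"
  shows "fst x = int q1 * fst (shift q1 q2 x) + fst (red q1 q2 x)"
    and "snd x = int q2 * snd (shift q1 q2 x) + snd (red q1 q2 x)"
  unfolding shift_def red_def
  by (simp_all add: algebra_simps)

lemma keys_entry:
  assumes "q1 > 0" "q2 > 0" "e \<in> Poly_Mapping.keys (DV_entry q1 q2 V n m - (if b then c else 0))"
    "Poly_Mapping.keys c \<subseteq> {(0,0)}" "b \<Longrightarrow> n = m"
  shows "okstep q1 q2 n m e"
proof -
  have step: "okstep q1 q2 n m e" if "red q1 q2 (n + d) = m" "e = shift q1 q2 (n + d)"
     "\<bar>fst d\<bar> + \<bar>snd d\<bar> \<le> 1" for d
  proof -
    have "fst (n+d) = int q1 * fst e + fst m" "snd (n+d) = int q2 * snd e + snd m"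
      using red_shift[OF assms(1,2), of "n+d"] that by auto
    then show ?thesis unfolding okstep_def using that(3)
      by (intro exI[of _ "fst d"] exI[of _ "snd d"]) auto
  qed
  have diag: "okstep q1 q2 n m e" if "n = m" "e = (0,0)"
    using that unfolding okstep_def by (intro exI[of _ 0] exI[of _ 0]) auto
  have k: "Poly_Mapping.keys (if P then lmono s else 0) \<subseteq> (if P then {s} else {})" for P s
    by (auto simp: lmono_def)
  have kc: "Poly_Mapping.keys (if n = m then lconst v else 0) \<subseteq> (if n = m then {(0,0)} else {})" for v
    by (auto simp: lconst_def)
  have kc2: "Poly_Mapping.keys (if n = m then c else 0) \<subseteq> (if n = m then {(0,0)} else {})"
    using assms(4) by auto
  have KA: "x \<in> Poly_Mapping.keys (a + b) \<Longrightarrow> x \<in> Poly_Mapping.keys a \<or> x \<in> Poly_Mapping.keys b" for x and a b :: laurent2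
    using Poly_Mapping.keys_add[of a b] by blast
  have KD: "x \<in> Poly_Mapping.keys (a - b) \<Longrightarrow> x \<in> Poly_Mapping.keys a \<or> x \<in> Poly_Mapping.keys b" for x and a b :: laurent2
    using Poly_Mapping.keys_diff[of a b] by blast
  define t where "t = (\<lambda>d. if red q1 q2 (n + d) = m then lmono (shift q1 q2 (n + d)) else (0::laurent2))"
  have DE: "DV_entry q1 q2 V n m = t (1,0) + (t (-1,0) + (t (0,1) + (t (0,-1) + 0))) + (if n = m then lconst (complex_of_real (V n)) else 0)"
    unfolding DV_entry_def t_def by (simp only: list.map sum_list.Cons sum_list.Nil)
  have "e \<in> Poly_Mapping.keys (t (1,0)) \<or> e \<in> Poly_Mapping.keys (t (-1,0)) \<or> e \<in> Poly_Mapping.keys (t (0,1))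
     \<or> e \<in> Poly_Mapping.keys (t (0,-1)) \<or> e \<in> Poly_Mapping.keys (0::laurent2)
     \<or> e \<in> Poly_Mapping.keys (if n = m then lconst (complex_of_real (V n)) else 0)
     \<or> e \<in> Poly_Mapping.keys (if b then c else 0)"
    using assms(3) unfolding DE
    apply -
    apply (drule KD, erule disjE)
     apply (drule KA, erule disjE)
      apply (drule KA, erule disjE, fast)
      apply (drule KA, erule disjE, fast)
      apply (drule KA, erule disjE, fast)
      apply (drule KA, erule disjE, fast, fast)
     apply fast
    apply fast
    done
  note disj0 = this
  have kl: "e \<in> Poly_Mapping.keys (if P then lmono s else 0) \<Longrightarrow> P \<and> e = s" for P s
    by (cases P) (auto simp: lmono_def)
  have kcl: "e \<in> Poly_Mapping.keys (if n = m then lconst v else 0) \<Longrightarrow> n = m \<and> e = (0,0)" for v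
    by (cases "n = m") (auto simp: lconst_def split: if_splits)
  have kcl2: "e \<in> Poly_Mapping.keys (if b then c else 0) \<Longrightarrow> n = m \<and> e = (0,0)"
    using assms(4,5) by (cases b) auto
  from disj0 have "e \<in> Poly_Mapping.keys (if red q1 q2 (n + (1,0)) = m then lmono (shift q1 q2 (n + (1,0))) else 0)
     \<or> e \<in> Poly_Mapping.keys (if red q1 q2 (n + (-1,0)) = m then lmono (shift q1 q2 (n + (-1,0))) else 0)
     \<or> e \<in> Poly_Mapping.keys (if red q1 q2 (n + (0,1)) = m then lmono (shift q1 q2 (n + (0,1))) else 0)
     \<or> e \<in> Poly_Mapping.keys (if red q1 q2 (n + (0,-1)) = m then lmono (shift q1 q2 (n + (0,-1))) else 0)
     \<or> e \<in> Poly_Mapping.keys (if n = m then lconst (complex_of_real (V n)) else 0)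
     \<or> e \<in> Poly_Mapping.keys (if b then c else 0)"
    unfolding t_def by (simp only: Poly_Mapping.keys_zero empty_iff simp_thms)
  then show ?thesis
    apply -
    apply (elim disjE)
         apply (drule kl, rule step[of "(1,0)"], simp, simp, simp)
        apply (drule kl, rule step[of "(-1,0)"], simp, simp, simp)
       apply (drule kl, rule step[of "(0,1)"], simp, simp, simp)
      apply (drule kl, rule step[of "(0,-1)"], simp, simp, simp)
     apply (drule kcl, rule diag, simp, simp)
    apply (drule kcl2, rule diag, simp, simp)
    done
qed

lemma keys_signof: "Poly_Mapping.keys ((of_int (sign p) :: laurent2) * X) = Poly_Mapping.keys X"
  by (cases "evenperm p") (simp_all add: sign_def)

lemma keys_z1: "Poly_Mapping.keys (z1_dz1 X) \<subseteq> Poly_Mapping.keys X"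
  unfolding z1_dz1_def by (rule keys_mapp_subset)

lemma geom:
  fixes x y :: real and A B :: real
  assumes "A > 0" "B > 0" "A * \<bar>x\<bar> + B * \<bar>y\<bar> \<le> A * B"
  shows "(x, y) \<in> convex hull {(B, 0), (0, A), (- B, 0), (0, - A)}"
proof -
  let ?S = "{(B, 0), (0, A), (- B, 0), (0, - A)}"
  define u where "u = (if x \<ge> 0 then (B, 0) else (- B, 0::real))"
  define v where "v = (if y \<ge> 0 then (0::real, A) else (0, - A))"
  have u: "u \<in> convex hull ?S" unfolding u_def by (auto intro: hull_inc)
  have v: "v \<in> convex hull ?S" unfolding v_def by (auto intro: hull_inc)
  have "(1/2::real) *\<^sub>R (B, 0::real) + (1/2::real) *\<^sub>R (- B, 0) \<in> convex hull ?S"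
    by (rule convexD[OF convex_convex_hull]) (auto intro: hull_inc)
  then have z: "(0::real, 0::real) \<in> convex hull ?S" by simp
  have sub: "convex hull {u, v, (0,0)} \<subseteq> convex hull ?S"
    using u v z by (intro convex_hull_subset) auto
  define s where "s = \<bar>x\<bar> / B"
  define t where "t = \<bar>y\<bar> / A"
  have st: "s + t \<le> 1"
  proof -
    have "s + t = (A * \<bar>x\<bar> + B * \<bar>y\<bar>) / (A * B)"
      unfolding s_def t_def using assms by (simp add: field_simps)
    also have "\<dots> \<le> 1" using assms by simp
    finally show ?thesis .
  qed
  have "(x, y) = s *\<^sub>R u + t *\<^sub>R v + (1 - s - t) *\<^sub>R (0::real, 0::real)"
    unfolding s_def t_def u_def v_def using assms by (auto simp: field_simps)
  moreover have "s \<ge> 0" "t \<ge> 0" unfolding s_def t_def using assms by auto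
  ultimately have "(x, y) \<in> convex hull {u, v, (0,0)}"
    unfolding convex_hull_3 using st by (intro CollectI exI[of _ s] exI[of _ t] exI[of _ "1 - s - t"]) auto
  then show ?thesis using sub by blast
qed

theorem corollary4p5:
  fixes q1 q2 :: nat and V :: "int \<times> int \<Rightarrow> real" and lam :: complex
  assumes "q1 > 0" and "q2 > 0" and "coprime q1 q2"
    and "periodic2 q1 q2 V"
  shows "\<forall>e \<in> Poly_Mapping.keys (z1_dz1 (charP q1 q2 V lam)).
           (real_of_int (fst e), real_of_int (snd e)) \<in> quadN q1 q2"
proof
  fix e assume e0: "e \<in> Poly_Mapping.keys (z1_dz1 (charP q1 q2 V lam))"
  define Q where "Q = q1 * q2"
  define M where "M = DV q1 q2 V - lconst lam \<cdot>\<^sub>m 1\<^sub>m Q"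
  have Mc: "M \<in> carrier_mat Q Q" unfolding M_def DV_def Q_def by (simp only: carrier_matI index_minus_mat dim_row_mat dim_col_mat index_smult_mat index_one_mat)
  have Mij: "M $$ (i, j) = DV_entry q1 q2 V (site q1 i) (site q1 j) - (if i = j then lconst lam else 0)"
    if "i < Q" "j < Q" for i j
  proof -
    have "M $$ (i, j) = DV q1 q2 V $$ (i, j) - lconst lam * (1\<^sub>m Q $$ (i, j))"
      unfolding M_def using that by (simp add: DV_def Q_def)
    also have "\<dots> = DV_entry q1 q2 V (site q1 i) (site q1 j) - (if i = j then lconst lam else 0)"
      using that by (simp add: DV_def Q_def)
    finally show ?thesis .
  qed
  have e1: "e \<in> Poly_Mapping.keys (charP q1 q2 V lam)"
    using keys_z1 e0 by (rule subsetD)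
  have eq: "charP q1 q2 V lam = (\<Sum>p \<in> {p. p permutes {0..<Q}}. signof p * (\<Prod>i = 0..<Q. M $$ (i, p i)))"
    unfolding charP_def M_def[symmetric] Q_def[symmetric] using det_def'[OF Mc] .
  have e2: "e \<in> Poly_Mapping.keys (\<Sum>p \<in> {p. p permutes {0..<Q}}. signof p * (\<Prod>i = 0..<Q. M $$ (i, p i)))"
    using e1 unfolding eq .
  have "e \<in> (\<Union>p \<in> {p. p permutes {0..<Q}}. Poly_Mapping.keys (signof p * (\<Prod>i = 0..<Q. M $$ (i, p i))))"
    by (rule subsetD[OF Poly_Mapping.keys_sum e2])
  then obtain p where p: "p permutes {0..<Q}" and
    ep: "e \<in> Poly_Mapping.keys (signof p * (\<Prod>i = 0..<Q. M $$ (i, p i)))"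
    by blast
  then have "e \<in> Poly_Mapping.keys (\<Prod>i = 0..<Q. M $$ (i, p i))"
    by (simp only: keys_signof)
  then have "e \<in> {sum g {0..<Q} | g. \<forall>i\<in>{0..<Q}. g i \<in> Poly_Mapping.keys (M $$ (i, p i))}"
    using keys_prod_sub[of "{0..<Q}" "\<lambda>i. M $$ (i, p i)"] by blast
  then obtain g where eg: "e = sum g {0..<Q}" and g: "\<forall>i\<in>{0..<Q}. g i \<in> Poly_Mapping.keys (M $$ (i, p i))"
    by blast
  have pQ: "i < Q \<Longrightarrow> p i < Q" for i using p permutes_in_image by fastforce
  have lk: "Poly_Mapping.keys (lconst lam) \<subseteq> {(0,0)}" by (simp add: lconst_def)
  have ok: "okstep q1 q2 (site q1 i) (site q1 (p i)) (g i)" if "i < Q" for i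
  proof -
    have "g i \<in> Poly_Mapping.keys (M $$ (i, p i))" using g that by simp
    then have "g i \<in> Poly_Mapping.keys (DV_entry q1 q2 V (site q1 i) (site q1 (p i)) - (if i = p i then lconst lam else 0))"
      unfolding Mij[OF that pQ[OF that]] .
    moreover have "i = p i \<Longrightarrow> site q1 i = site q1 (p i)" by simp
    ultimately show ?thesis by (rule keys_entry[OF assms(1,2) _ lk])
  qed
  have "\<forall>i. \<exists>dx dy. i < Q \<longrightarrow> (\<bar>dx\<bar> + \<bar>dy\<bar> \<le> 1 \<and>
      int q1 * fst (g i) = fst (site q1 i) + dx - fst (site q1 (p i)) \<and>
      int q2 * snd (g i) = snd (site q1 i) + dy - snd (site q1 (p i)))"
    using ok unfolding okstep_def by blast
  then obtain dx dy where d0: "\<forall>i. i < Q \<longrightarrow> (\<bar>dx i\<bar> + \<bar>dy i\<bar> \<le> 1 \<and>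
      int q1 * fst (g i) = fst (site q1 i) + dx i - fst (site q1 (p i)) \<and>
      int q2 * snd (g i) = snd (site q1 i) + dy i - snd (site q1 (p i)))"
    by metis
  have d: "\<And>i. i < Q \<Longrightarrow> \<bar>dx i\<bar> + \<bar>dy i\<bar> \<le> 1 \<and>
      int q1 * fst (g i) = fst (site q1 i) + dx i - fst (site q1 (p i)) \<and>
      int q2 * snd (g i) = snd (site q1 i) + dy i - snd (site q1 (p i))"
    using d0 by blast
  have bij: "bij_betw p {0..<Q} {0..<Q}" using p permutes_imp_bij by blast
  have rs1: "(\<Sum>i=0..<Q. fst (site q1 (p i))) = (\<Sum>i=0..<Q. fst (site q1 i))"
    using sum.reindex_bij_betw[OF bij, of "\<lambda>i. fst (site q1 i)"] .
  have rs2: "(\<Sum>i=0..<Q. snd (site q1 (p i))) = (\<Sum>i=0..<Q. snd (site q1 i))"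
    using sum.reindex_bij_betw[OF bij, of "\<lambda>i. snd (site q1 i)"] .
  have X: "int q1 * fst e = (\<Sum>i=0..<Q. dx i)"
  proof -
    have "int q1 * fst e = (\<Sum>i=0..<Q. int q1 * fst (g i))"
      unfolding eg by (simp add: fst_sum sum_distrib_left)
    also have "\<dots> = (\<Sum>i=0..<Q. fst (site q1 i) + dx i - fst (site q1 (p i)))"
      using d by (intro sum.cong) auto
    also have "\<dots> = (\<Sum>i=0..<Q. dx i)"
      using rs1 by (simp add: sum.distrib sum_subtractf)
    finally show ?thesis .
  qed
  have Y: "int q2 * snd e = (\<Sum>i=0..<Q. dy i)"
  proof -
    have "int q2 * snd e = (\<Sum>i=0..<Q. int q2 * snd (g i))"
      unfolding eg by (simp add: snd_sum sum_distrib_left)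
    also have "\<dots> = (\<Sum>i=0..<Q. snd (site q1 i) + dy i - snd (site q1 (p i)))"
      using d by (intro sum.cong) auto
    also have "\<dots> = (\<Sum>i=0..<Q. dy i)"
      using rs2 by (simp add: sum.distrib sum_subtractf)
    finally show ?thesis .
  qed
  have "\<bar>int q1 * fst e\<bar> + \<bar>int q2 * snd e\<bar> \<le> (\<Sum>i=0..<Q. \<bar>dx i\<bar>) + (\<Sum>i=0..<Q. \<bar>dy i\<bar>)"
    unfolding X Y by (intro add_mono sum_abs)
  also have "\<dots> = (\<Sum>i=0..<Q. \<bar>dx i\<bar> + \<bar>dy i\<bar>)" by (simp add: sum.distrib)
  also have "\<dots> \<le> (\<Sum>i=0..<Q. 1)" using d by (intro sum_mono) auto
  also have "\<dots> = int q1 * int q2" by (simp add: Q_def)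
  finally have B: "\<bar>int q1 * fst e\<bar> + \<bar>int q2 * snd e\<bar> \<le> int q1 * int q2" .
  have B': "real q1 * \<bar>real_of_int (fst e)\<bar> + real q2 * \<bar>real_of_int (snd e)\<bar> \<le> real q1 * real q2"
  proof -
    have "real_of_int (\<bar>int q1 * fst e\<bar> + \<bar>int q2 * snd e\<bar>) \<le> real_of_int (int q1 * int q2)"
      using B by linarith
    then show ?thesis by (simp add: abs_mult)
  qed
  show "(real_of_int (fst e), real_of_int (snd e)) \<in> quadN q1 q2"
    unfolding quadN_def using geom[of "real q1" "real q2"] B' assms(1,2) by auto
qed

end
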